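(* Let $X_1,X_2,\dots$ be i.i.d. Bernoulli random variables with $\Pr\{X_i=1\}=1-\Pr\{X_i=0\}=p\in(0,1)$ and let $\widehat{\boldsymbol p}=\frac1n\sum_{i=1}^nX_i$. Let $0<\varepsilon<\frac34$ and $0<\delta<2\exp\!\Big(-\frac{9\ln2}{(3-4\varepsilon)^2}\Big)$. Define $$\zeta=\frac{4C_{\mathrm{BE}}}{\sqrt{\Big[1-\Big(\frac{4\varepsilon}{3}+\sqrt{\frac{\ln2}{\ln\frac2\delta}}\Big)^2\Big]\frac{\ln\frac1\delta}{2\varepsilon^2}}}.$$ Then $\Pr\{|\widehat{\boldsymbol p}-p|<\varepsilon\mid p\}>1-\delta$ for every $p\in(0,1)$, provided that $$n>\frac1{2\varepsilon^2}\ln\frac{1+\zeta}{\delta}.$$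
   Context: $C_{\mathrm{BE}}$ denotes the absolute constant in the Berry–Esseen inequality: for i.i.d. $Y_1,Y_2,\dots$ distributed as $Y$ with $\mathbb{E}[Y]=0$, $\mathbb{E}[Y^2]>0$, $\mathbb{E}[|Y|^3]<\infty$, the cdf $F_n$ of $\sum_{i=1}^nY_i/\sqrt{n\mathbb{E}[Y^2]}$ satisfies $|F_n(y)-\Phi(y)|\le\frac{C_{\mathrm{BE}}}{\sqrt n}\frac{\mathbb{E}[|Y|^3]}{\mathbb{E}^{3/2}[Y^2]}$ for all $y,n$, where $\Phi$ is the standard normal cdf. $\Pr\{\cdot\mid p\}$ denotes probability when the Bernoulli parameter is $p$. *)

theory Defs
  imports "HOL-Probability.Probability"
begin

definition std_normal_cdf :: "real \<Rightarrow> real" where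
  "std_normal_cdf x = measure (density lborel std_normal_density) {..x}"

definition berry_esseen_const :: "real \<Rightarrow> bool" where
  "berry_esseen_const C \<longleftrightarrow>
    (\<forall>M :: real measure.
       prob_space M \<and> sets M = sets borel \<and> integrable M (\<lambda>y. \<bar>y\<bar> ^ 3) \<and>
       (\<integral>y. y \<partial>M) = 0 \<and> (\<integral>y. y\<^sup>2 \<partial>M) > 0 \<longrightarrow>
       (\<forall>n::nat. n > 0 \<longrightarrow> (\<forall>x::real.
          \<bar>measure (PiM {..<n} (\<lambda>_. M))
              {\<omega> \<in> space (PiM {..<n} (\<lambda>_. M)).
                 (\<Sum>i<n. \<omega> i) / sqrt (real n * (\<integral>y. y\<^sup>2 \<partial>M)) \<le> x}
           - std_normal_cdf x\<bar>
          \<le> C / sqrt (real n) * ((\<integral>y. \<bar>y\<bar> ^ 3 \<partial>M) / (\<integral>y. y\<^sup>2 \<partial>M) powr (3/2)))))"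

end

theory Submission imports Defs begin


definition Mb :: "real \<Rightarrow> real measure" where
  "Mb r = distr (measure_pmf (bernoulli_pmf r)) borel (\<lambda>b. if b then r - 1 else r)"

lemma Mb_props:
  assumes r: "0 < r" "r < 1"
  shows "prob_space (Mb r)" "sets (Mb r) = sets borel"
    "integrable (Mb r) (\<lambda>y. \<bar>y\<bar> ^ 3)"
    "(\<integral>y. y \<partial>Mb r) = 0"
    "(\<integral>y. y\<^sup>2 \<partial>Mb r) = r * (1 - r)"
    "(\<integral>y. \<bar>y\<bar> ^ 3 \<partial>Mb r) = r * (1 - r) * (r\<^sup>2 + (1 - r)\<^sup>2)"
proof -
  show "prob_space (Mb r)" unfolding Mb_def by (rule measure_pmf.prob_space_distr) simp
  show "sets (Mb r) = sets borel" unfolding Mb_def by simp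
  show "integrable (Mb r) (\<lambda>y. \<bar>y\<bar> ^ 3)" unfolding Mb_def
    by (subst integrable_distr_eq) (auto intro!: integrable_measure_pmf_finite)
  have i: "(\<integral>y. f y \<partial>Mb r) = f (r - 1) * r + f r * (1 - r)" if [measurable]: "f \<in> borel_measurable borel" for f :: "real \<Rightarrow> real"
    unfolding Mb_def using r by (subst integral_distr) auto
  show "(\<integral>y. y \<partial>Mb r) = 0" by (subst i) (auto simp: algebra_simps)
  show "(\<integral>y. y\<^sup>2 \<partial>Mb r) = r * (1 - r)" by (subst i) (auto simp: algebra_simps power2_eq_square)
  show "(\<integral>y. \<bar>y\<bar> ^ 3 \<partial>Mb r) = r * (1 - r) * (r\<^sup>2 + (1 - r)\<^sup>2)"
    using r by (subst i) (auto simp: algebra_simps power2_eq_square power3_eq_cube abs_if)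
qed



lemma PiM_Mb_event:
  assumes r: "0 < r" "r < 1" and n: "n > 0"
  shows "measure (PiM {..<n} (\<lambda>_. Mb r)) {\<omega> \<in> space (PiM {..<n} (\<lambda>_. Mb r)). (\<Sum>i<n. \<omega> i) \<le> 0}
       = measure_pmf.prob (binomial_pmf n r) {k. real k \<ge> real n * r}"
proof -
  define coins where "coins = Pi_pmf {..<n} False (\<lambda>_. bernoulli_pmf r)"
  define X where "X = (\<lambda>i (f::nat \<Rightarrow> bool). if f i then r - 1 else r)"
  have ind: "prob_space.indep_vars (measure_pmf coins) (\<lambda>_. borel) X {..<n}"
    unfolding coins_def X_def
    by (intro prob_space.indep_vars_compose2[OF _ indep_vars_Pi_pmf])
       (auto simp: measure_pmf.prob_space_axioms)
  have comp: "distr (measure_pmf coins) borel (X i) = Mb r" if i: "i < n" for i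
  proof -
    have "distr (measure_pmf coins) borel (X i) =
        distr (measure_pmf (map_pmf (\<lambda>f. f i) coins)) borel (\<lambda>b. if b then r - 1 else r)"
      unfolding map_pmf_rep_eq X_def by (subst distr_distr) (auto simp: o_def)
    also have "map_pmf (\<lambda>f. f i) coins = bernoulli_pmf r"
      unfolding coins_def using i by (subst Pi_pmf_component) auto
    finally show ?thesis unfolding Mb_def .
  qed
  have eq: "distr (measure_pmf coins) (PiM {..<n} (\<lambda>_. borel)) (\<lambda>x. \<lambda>i\<in>{..<n}. X i x)
      = PiM {..<n} (\<lambda>i. distr (measure_pmf coins) borel (X i))"
    using ind n by (subst (asm) prob_space.indep_vars_iff_distr_eq_PiM[OF measure_pmf.prob_space_axioms]) (auto simp: X_def)
  have eq2: "PiM {..<n} (\<lambda>i. distr (measure_pmf coins) borel (X i)) = PiM {..<n} (\<lambda>_. Mb r)"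
    by (rule PiM_cong) (auto simp: comp)
  have sp: "space (PiM {..<n} (\<lambda>_. Mb r)) = space (PiM {..<n} (\<lambda>_. (borel::real measure)))"
    by (simp add: space_PiM Mb_def)
  have meas: "{\<omega> \<in> space (PiM {..<n} (\<lambda>_. borel)). (\<Sum>i<n. \<omega> i) \<le> (0::real)} \<in> sets (PiM {..<n} (\<lambda>_. borel))"
    by measurable
  have "measure (PiM {..<n} (\<lambda>_. Mb r)) {\<omega> \<in> space (PiM {..<n} (\<lambda>_. Mb r)). (\<Sum>i<n. \<omega> i) \<le> 0}
      = measure (distr (measure_pmf coins) (PiM {..<n} (\<lambda>_. borel)) (\<lambda>x. \<lambda>i\<in>{..<n}. X i x))
          {\<omega> \<in> space (PiM {..<n} (\<lambda>_. borel)). (\<Sum>i<n. \<omega> i) \<le> 0}"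
    using eq eq2 sp by simp
  also have "\<dots> = measure (measure_pmf coins) {f. (\<Sum>i<n. X i f) \<le> 0}"
    using meas by (subst measure_distr) (auto simp: X_def space_PiM PiE_def intro!: arg_cong2[where f=measure])
  also have "\<dots> = measure_pmf.prob coins {x. real n * r \<le> (\<Sum>i<n. if x i then 1 else 0)}"
  proof -
    have "(\<Sum>i<n. X i f) = real n * r - (\<Sum>i<n. if f i then 1 else 0)" for f
    proof -
      have "(\<Sum>i<n. X i f) = (\<Sum>i<n. r - (if f i then 1 else 0))"
        by (rule sum.cong) (auto simp: X_def)
      thus ?thesis by (simp add: sum_subtractf)
    qed
    thus ?thesis by (auto intro!: arg_cong2[where f=measure])
  qed
  also have "\<dots> = measure_pmf.prob (binomial_pmf n r) {k. real k \<ge> real n * r}"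
    unfolding coins_def
    using binomial_distribution.prob_binomial_pmf_conv_coins[of r n "\<lambda>t. real n * r \<le> t"] r n
    by (auto simp: binomial_distribution_def)
  finally show ?thesis .
qed



lemma std_normal_cdf_0: "std_normal_cdf 0 = 1/2"
proof -
  define N where "N = density lborel std_normal_density"
  interpret N: prob_space N unfolding N_def by (rule prob_space_normal_density) simp
  have sN: "sets N = sets borel" by (simp add: N_def)
  have sym: "emeasure N {..0} = emeasure N {0..}"
  proof -
    have "emeasure N {..0} = (\<integral>\<^sup>+x. ennreal (std_normal_density x) * indicator {..0} x \<partial>lborel)"
      unfolding N_def by (subst emeasure_density) auto
    also have "\<dots> = (\<integral>\<^sup>+x. ennreal (std_normal_density x) * indicator {..0} x \<partial>(distr lborel borel uminus))"
      by (simp add: lborel_distr_uminus)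
    also have "\<dots> = (\<integral>\<^sup>+x. ennreal (std_normal_density (-x)) * indicator {..0} (-x) \<partial>lborel)"
      by (subst nn_integral_distr) auto
    also have "\<dots> = (\<integral>\<^sup>+x. ennreal (std_normal_density x) * indicator {0..} x \<partial>lborel)"
      by (intro nn_integral_cong) (auto simp: std_normal_density_def indicator_def)
    also have "\<dots> = emeasure N {0..}"
      unfolding N_def by (subst emeasure_density) auto
    finally show ?thesis .
  qed
  have z: "emeasure N {0} = 0"
  proof -
    have "emeasure N {0} = (\<integral>\<^sup>+x. ennreal (std_normal_density x) * indicator {0} x \<partial>lborel)"
      unfolding N_def by (subst emeasure_density) auto
    also have "\<dots> = ennreal (std_normal_density 0) * emeasure lborel {0}"
      by (simp add: mult.commute)
    finally show ?thesis by simp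
  qed
  have a: "measure N {..0} = measure N {0..}" using sym by (simp add: measure_def)
  have b: "measure N {0..} = measure N {0<..}"
  proof -
    have "measure N {0..} = measure N ({0} \<union> {0<..})" by (auto intro!: arg_cong2[where f=measure])
    also have "\<dots> = measure N {0} + measure N {0<..}"
      by (rule N.finite_measure_Union) (auto simp: sN)
    finally show ?thesis using z by (simp add: measure_def)
  qed
  have c: "measure N {..0} = 1 - measure N {0<..}"
  proof -
    have "measure N (space N - {0<..}) = 1 - measure N {0<..}" by (rule N.prob_compl) (simp add: sN)
    moreover have "space N - {0<..} = {..0}" by (auto simp: N_def)
    ultimately show ?thesis by simp
  qed
  show ?thesis unfolding std_normal_cdf_def N_def[symmetric] using a b c by simp
qed



lemma BE_bern:
  assumes BE: "berry_esseen_const C" and r: "0 < r" "r < 1" and n: "n > 0"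
  shows "\<bar>measure_pmf.prob (binomial_pmf n r) {k. real k \<ge> real n * r} - 1/2\<bar>
     \<le> C / sqrt (real n) * ((r * (1 - r) * (r\<^sup>2 + (1 - r)\<^sup>2)) / (r * (1 - r)) powr (3/2))"
proof -
  note P = Mb_props[OF r]
  have v: "(\<integral>y. y\<^sup>2 \<partial>Mb r) > 0" using P(5) r by simp
  from BE[unfolded berry_esseen_const_def, rule_format, of "Mb r" n 0] P v n
  have *: "\<bar>measure (PiM {..<n} (\<lambda>_. Mb r))
              {\<omega> \<in> space (PiM {..<n} (\<lambda>_. Mb r)).
                 (\<Sum>i<n. \<omega> i) / sqrt (real n * (r * (1 - r))) \<le> 0}
           - std_normal_cdf 0\<bar>
          \<le> C / sqrt (real n) * ((r * (1 - r) * (r\<^sup>2 + (1 - r)\<^sup>2)) / (r * (1 - r)) powr (3/2))"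
    by simp
  have pos: "sqrt (real n * (r * (1 - r))) > 0" using r n by simp
  have "{\<omega> \<in> space (PiM {..<n} (\<lambda>_. Mb r)). (\<Sum>i<n. \<omega> i) / sqrt (real n * (r * (1 - r))) \<le> 0}
      = {\<omega> \<in> space (PiM {..<n} (\<lambda>_. Mb r)). (\<Sum>i<n. \<omega> i) \<le> 0}"
    using pos by (auto simp: divide_le_0_iff)
  with * show ?thesis by (simp add: PiM_Mb_event[OF r n] std_normal_cdf_0)
qed

lemma BE_nonneg:
  assumes BE: "berry_esseen_const C"
  shows "C \<ge> 0"
proof -
  let ?X = "(((1/2::real) * (1 - 1/2) * ((1/2)\<^sup>2 + (1 - 1/2)\<^sup>2)) / ((1/2) * (1 - 1/2)) powr (3/2))"
  have "\<bar>measure_pmf.prob (binomial_pmf 1 (1/2)) {k. real k \<ge> real 1 * (1/2)} - 1/2\<bar>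
     \<le> C / sqrt (real 1) * ?X"
    by (rule BE_bern[OF BE]) auto
  hence "0 \<le> C / sqrt (real 1) * ?X" by (meson abs_ge_zero order_trans)
  hence h: "0 \<le> C * ?X" by (simp only: of_nat_1 real_sqrt_one div_by_1)
  have "?X > 0" by (intro divide_pos_pos) auto
  with h show ?thesis unfolding zero_le_mult_iff by linarith
qed

lemma BE_bern_upper:
  assumes BE: "berry_esseen_const C" and r: "0 < r" "r < 1" and n: "n > 0"
  shows "measure_pmf.prob (binomial_pmf n r) {k. real k \<ge> real n * r}
     \<le> 1/2 + C / sqrt (real n * (r * (1 - r)))"
proof -
  have C: "C \<ge> 0" by (rule BE_nonneg[OF BE])
  let ?v = "r * (1 - r)"
  have v: "?v > 0" using r by simp
  have "(?v * (r\<^sup>2 + (1 - r)\<^sup>2)) / ?v powr (3/2) = (r\<^sup>2 + (1 - r)\<^sup>2) / sqrt ?v"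
  proof -
    have "?v powr (3/2) = ?v powr (1 + 1/2)" by simp
    also have "\<dots> = ?v powr 1 * ?v powr (1/2)" by (rule powr_add)
    also have "\<dots> = ?v * sqrt ?v" using v by (simp add: powr_half_sqrt)
    finally have e: "?v powr (3/2) = ?v * sqrt ?v" .
    show ?thesis unfolding e using v by (subst mult_divide_mult_cancel_left) auto
  qed
  also have "\<dots> \<le> 1 / sqrt ?v"
  proof -
    have "r\<^sup>2 + (1 - r)\<^sup>2 \<le> 1" using r by (simp add: power2_eq_square algebra_simps)
    thus ?thesis using v by (simp add: divide_right_mono)
  qed
  finally have rho: "(?v * (r\<^sup>2 + (1 - r)\<^sup>2)) / ?v powr (3/2) \<le> 1 / sqrt ?v" .
  have "measure_pmf.prob (binomial_pmf n r) {k. real k \<ge> real n * r} - 1/2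
     \<le> C / sqrt (real n) * ((?v * (r\<^sup>2 + (1 - r)\<^sup>2)) / ?v powr (3/2))"
    using BE_bern[OF BE r n] by simp
  also have "\<dots> \<le> C / sqrt (real n) * (1 / sqrt ?v)"
    using rho C by (intro mult_left_mono) auto
  also have "\<dots> = C / sqrt (real n * ?v)" by (simp add: real_sqrt_mult)
  finally show ?thesis by simp
qed



definition KL :: "real \<Rightarrow> real \<Rightarrow> real" where
  "KL r p = r * (ln r - ln p) + (1 - r) * (ln (1 - r) - ln (1 - p))"

lemma prob_binom_sum:
  fixes p :: real
  assumes "0 < p" "p < 1"
  shows "measure_pmf.prob (binomial_pmf n p) A = (\<Sum>k\<in>A \<inter> {..n}. (n choose k) * p ^ k * (1 - p) ^ (n - k))"
proof -
  have "measure_pmf.prob (binomial_pmf n p) A = measure_pmf.prob (binomial_pmf n p) (A \<inter> set_pmf (binomial_pmf n p))"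
    by (simp add: measure_Int_set_pmf)
  also have "\<dots> = (\<Sum>k\<in>A \<inter> {..n}. pmf (binomial_pmf n p) k)"
    using assms by (subst measure_measure_pmf_finite) auto
  also have "\<dots> = (\<Sum>k\<in>A \<inter> {..n}. (n choose k) * p ^ k * (1 - p) ^ (n - k))"
    using assms by (intro sum.cong) auto
  finally show ?thesis .
qed

lemma tilt:
  assumes p: "0 < p" and pr: "p < r" and r: "r < 1"
  shows "measure_pmf.prob (binomial_pmf n p) {k. real k \<ge> real n * r}
      \<le> exp (- real n * KL r p) * measure_pmf.prob (binomial_pmf n r) {k. real k \<ge> real n * r}"
proof -
  have p1: "p < 1" "0 < r" using assms by auto
  have pt: "(n choose k) * p ^ k * (1 - p) ^ (n - k) \<le> exp (- real n * KL r p) * ((n choose k) * r ^ k * (1 - r) ^ (n - k))"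
    if k: "k \<le> n" "real k \<ge> real n * r" for k
  proof -
    define a where "a = ln p - ln r"
    define b where "b = ln (1 - p) - ln (1 - r)"
    have a: "a < 0" unfolding a_def using assms by simp
    have b: "b > 0" unfolding b_def using assms by simp
    have nk: "real (n - k) = real n - real k" using k by simp
    have "p ^ k * (1 - p) ^ (n - k) = exp (real k * ln p + real (n - k) * ln (1 - p))"
      using assms by (simp add: exp_add exp_of_nat_mult)
    also have "\<dots> \<le> exp (- real n * KL r p + (real k * ln r + real (n - k) * ln (1 - r)))"
    proof -
      have "(real k - real n * r) * (a - b) \<le> 0"
        using k a b by (intro mult_nonneg_nonpos) auto
      hence "real k * ln p + real (n - k) * ln (1 - p) \<le> - real n * KL r p + (real k * ln r + real (n - k) * ln (1 - r))"
        unfolding KL_def nk a_def b_def by (simp add: algebra_simps)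
      thus ?thesis by simp
    qed
    also have "\<dots> = exp (- real n * KL r p) * exp (real k * ln r + real (n - k) * ln (1 - r))"
      by (rule exp_add)
    also have "exp (real k * ln r + real (n - k) * ln (1 - r)) = r ^ k * (1 - r) ^ (n - k)"
      using assms by (simp add: exp_add exp_of_nat_mult)
    finally have "p ^ k * (1 - p) ^ (n - k) \<le> exp (- real n * KL r p) * (r ^ k * (1 - r) ^ (n - k))" .
    hence "real (n choose k) * (p ^ k * (1 - p) ^ (n - k)) \<le> real (n choose k) * (exp (- real n * KL r p) * (r ^ k * (1 - r) ^ (n - k)))"
      by (intro mult_left_mono) auto
    thus ?thesis by (simp add: algebra_simps)
  qed
  have "measure_pmf.prob (binomial_pmf n p) {k. real k \<ge> real n * r}
      = (\<Sum>k\<in>{k. real k \<ge> real n * r} \<inter> {..n}. (n choose k) * p ^ k * (1 - p) ^ (n - k))"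
    using p p1 by (intro prob_binom_sum) auto
  also have "\<dots> \<le> (\<Sum>k\<in>{k. real k \<ge> real n * r} \<inter> {..n}. exp (- real n * KL r p) * ((n choose k) * r ^ k * (1 - r) ^ (n - k)))"
    by (intro sum_mono pt) auto
  also have "\<dots> = exp (- real n * KL r p) * measure_pmf.prob (binomial_pmf n r) {k. real k \<ge> real n * r}"
    using p1 r by (simp add: prob_binom_sum sum_distrib_left)
  finally show ?thesis .
qed



lemma tangent_ineq:
  fixes y y0 :: real
  assumes y: "-1 < y" "y < 1" and y0: "-1 < y0" "y0 < 1"
  shows "4 / (1 - y\<^sup>2) \<ge> 4 / (1 - y0\<^sup>2) + 8 * y0 * (y - y0) / (1 - y0\<^sup>2)\<^sup>2"
proof -
  have A: "1 - y\<^sup>2 > 0" using y by (simp add: abs_square_less_1)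
  have B: "1 - y0\<^sup>2 > 0" using y0 by (simp add: abs_square_less_1)
  have gen: "4 / a - (4 / b + 8 * y0 * (y - y0) / b\<^sup>2) = (4 * b\<^sup>2 - 4 * a * b - 8 * y0 * (y - y0) * a) / (a * b\<^sup>2)"
    if "a > 0" "b > 0" for a b :: real
    using that by (simp add: field_simps power2_eq_square)
  have num: "4 * (1 - y0\<^sup>2)\<^sup>2 - 4 * (1 - y\<^sup>2) * (1 - y0\<^sup>2) - 8 * y0 * (y - y0) * (1 - y\<^sup>2)
      = 4 * (y - y0)\<^sup>2 * ((y + y0)\<^sup>2 + (1 - y\<^sup>2))"
    by (simp add: power2_eq_square algebra_simps)
  have eq: "4 / (1 - y\<^sup>2) - (4 / (1 - y0\<^sup>2) + 8 * y0 * (y - y0) / (1 - y0\<^sup>2)\<^sup>2)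
      = 4 * (y - y0)\<^sup>2 * ((y + y0)\<^sup>2 + (1 - y\<^sup>2)) / ((1 - y\<^sup>2) * (1 - y0\<^sup>2)\<^sup>2)"
    using gen[OF A B] num by simp
  have "4 * (y - y0)\<^sup>2 * ((y + y0)\<^sup>2 + (1 - y\<^sup>2)) / ((1 - y\<^sup>2) * (1 - y0\<^sup>2)\<^sup>2) \<ge> 0"
    using A B by (intro divide_nonneg_pos mult_nonneg_nonneg) auto
  with eq show ?thesis by linarith
qed

lemma KL_lower:
  fixes r e :: real
  assumes e: "0 < e" "e < r" and r: "r < 1"
  defines "y0 \<equiv> 2 * r - 1 - 4 * e / 3"
  shows "-1 < y0" "y0 < 1" "KL r (r - e) \<ge> 2 * e\<^sup>2 / (1 - y0\<^sup>2)"
proof -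
  show y0a: "-1 < y0" "y0 < 1" using assms by auto
  define x where "x = 2 * r - 1"
  define \<alpha> where "\<alpha> = 4 / (1 - y0\<^sup>2)"
  define \<beta> where "\<beta> = 8 * y0 / (1 - y0\<^sup>2)\<^sup>2"
  define F where "F = (\<lambda>s. KL r (r - s) - (\<alpha> * s\<^sup>2 / 2 + \<beta> * (x - y0) * s\<^sup>2 / 2 - 2 * \<beta> * s ^ 3 / 3))"
  have "F 0 \<le> F e"
  proof (rule DERIV_nonneg_imp_nondecreasing[where f=F and a=0 and b=e])
    show "0 \<le> e" using e by simp
    fix s assume s0: "0 \<le> s" "s \<le> e"
    hence s: "0 \<le> s \<and> s \<le> e" by simp
    have rs: "0 < r - s" "0 < 1 - r + s" using s e r by auto
    have D: "(F has_real_derivative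
        (r * (1 / (r - s)) - (1 - r) * (1 / (1 - r + s)) - (\<alpha> * s + \<beta> * (x - y0) * s - 2 * \<beta> * s\<^sup>2))) (at s)"
      unfolding F_def KL_def using rs
      apply (intro derivative_eq_intros)
      apply (auto simp: power2_eq_square)
      done
    have "r * (1 / (r - s)) - (1 - r) * (1 / (1 - r + s)) = s * (4 / (1 - (x - 2 * s)\<^sup>2))"
    proof -
      have q: "1 - (x - 2 * s)\<^sup>2 = 4 * ((r - s) * (1 - r + s))"
        unfolding x_def by (simp add: power2_eq_square algebra_simps)
      have "r * (1 / (r - s)) - (1 - r) * (1 / (1 - r + s)) = s / ((r - s) * (1 - r + s))"
        using rs by (simp add: field_simps)
      thus ?thesis unfolding q using rs by simp
    qed
    moreover have "4 / (1 - (x - 2 * s)\<^sup>2) \<ge> \<alpha> + \<beta> * ((x - 2 * s) - y0)"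
      unfolding \<alpha>_def \<beta>_def using tangent_ineq[of "x - 2 * s" y0] y0a rs unfolding x_def
      by (simp add: algebra_simps)
    ultimately have "r * (1 / (r - s)) - (1 - r) * (1 / (1 - r + s)) - (\<alpha> * s + \<beta> * (x - y0) * s - 2 * \<beta> * s\<^sup>2)
        = s * (4 / (1 - (x - 2 * s)\<^sup>2) - (\<alpha> + \<beta> * ((x - 2 * s) - y0)))"
      "4 / (1 - (x - 2 * s)\<^sup>2) - (\<alpha> + \<beta> * ((x - 2 * s) - y0)) \<ge> 0"
      by (auto simp: algebra_simps power2_eq_square)
    hence "r * (1 / (r - s)) - (1 - r) * (1 / (1 - r + s)) - (\<alpha> * s + \<beta> * (x - y0) * s - 2 * \<beta> * s\<^sup>2) \<ge> 0"
      using s by simp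
    with D show "\<exists>y. (F has_real_derivative y) (at s) \<and> 0 \<le> y" by blast
  qed
  moreover have "F 0 = 0" unfolding F_def KL_def by simp
  moreover have "F e = KL r (r - e) - \<alpha> * e\<^sup>2 / 2"
    unfolding F_def x_def y0_def by (simp add: algebra_simps power2_eq_square power3_eq_cube)
  ultimately have "KL r (r - e) \<ge> \<alpha> * e\<^sup>2 / 2" by simp
  moreover have "\<alpha> * e\<^sup>2 / 2 = 2 * e\<^sup>2 / (1 - y0\<^sup>2)"
    unfolding \<alpha>_def by (simp add: divide_simps)
  ultimately show "KL r (r - e) \<ge> 2 * e\<^sup>2 / (1 - y0\<^sup>2)" by simp
qed



lemma ln_cubic:
  fixes e :: real assumes "0 \<le> e" "e < 1"
  shows "ln (1 - e) \<le> - (e + e\<^sup>2 / 2 + e ^ 3 / 3)"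
proof -
  define G where "G = (\<lambda>t::real. - t - t\<^sup>2 / 2 - t ^ 3 / 3 - ln (1 - t))"
  have "G 0 \<le> G e"
  proof (rule DERIV_nonneg_imp_nondecreasing[where f=G and a=0 and b=e])
    show "0 \<le> e" using assms by simp
    fix t assume t: "0 \<le> t" "t \<le> e"
    have t1: "1 - t > 0" using t assms by simp
    have D: "(G has_real_derivative (- 1 - t - t\<^sup>2 + 1 / (1 - t))) (at t)"
      unfolding G_def using t1
      by (auto intro!: derivative_eq_intros simp: power2_eq_square field_simps)
    have "- 1 - t - t\<^sup>2 + 1 / (1 - t) = t ^ 3 / (1 - t)"
      using t1 by (simp add: field_simps power2_eq_square power3_eq_cube)
    moreover have "t ^ 3 / (1 - t) \<ge> 0" using t t1 by simp
    ultimately show "\<exists>y. (G has_real_derivative y) (at t) \<and> 0 \<le> y" using D by auto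
  qed
  thus ?thesis unfolding G_def by simp
qed

lemma r1_bound:
  fixes e :: real assumes e: "0 < e" "e < 3/4"
  shows "ln (1 - e) \<le> - (2 * e\<^sup>2 / (1 - (1 - 4 * e / 3)\<^sup>2))"
proof -
  have "2 * e\<^sup>2 / (1 - (1 - 4 * e / 3)\<^sup>2) = 9 * e / (12 - 8 * e)"
    using e by (simp add: field_simps power2_eq_square)
  also have "\<dots> \<le> e + e\<^sup>2 / 2 + e ^ 3 / 3"
  proof -
    have e3: "e ^ 3 \<le> (3/4) ^ 3" using e by (intro power_mono) auto
    have e3': "e ^ 3 \<le> 27/64" using e3 by (simp add: power3_eq_cube)
    have "9 \<le> 12 - 2 * e - 8 / 3 * e ^ 3" using e e3' by linarith
    hence "9 * e \<le> e * (12 - 2 * e - 8 / 3 * e ^ 3)" using e by (simp add: mult_left_mono)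
    also have "\<dots> = (e + e\<^sup>2 / 2 + e ^ 3 / 3) * (12 - 8 * e)"
      by (simp add: algebra_simps power2_eq_square power3_eq_cube)
    finally show ?thesis using e by (simp add: divide_le_eq)
  qed
  finally show ?thesis using ln_cubic[of e] e by simp
qed

lemma extreme_bound:
  fixes n m \<epsilon> \<phi> w K :: real
  assumes w: "0 < 1 - w\<^sup>2" "\<phi>\<^sup>2 \<le> w\<^sup>2" and phi: "\<phi>\<^sup>2 < 1"
    and K: "K \<ge> 2 * \<epsilon>\<^sup>2 / (1 - w\<^sup>2)" and nm: "m \<le> n" "0 \<le> m"
    and mdef: "2 * \<epsilon>\<^sup>2 * m * \<phi>\<^sup>2 = ln 2 * (1 - \<phi>\<^sup>2)"
  shows "exp (- n * K) \<le> exp (- 2 * n * \<epsilon>\<^sup>2) / 2"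
proof -
  have p1: "0 < 1 - \<phi>\<^sup>2" using phi by simp
  have "2 * \<epsilon>\<^sup>2 / (1 - \<phi>\<^sup>2) \<le> 2 * \<epsilon>\<^sup>2 / (1 - w\<^sup>2)"
    using w p1 by (intro divide_left_mono) auto
  with K have K2: "K \<ge> 2 * \<epsilon>\<^sup>2 / (1 - \<phi>\<^sup>2)" by linarith
  have "n * K \<ge> n * (2 * \<epsilon>\<^sup>2 / (1 - \<phi>\<^sup>2))" using K2 nm by (intro mult_left_mono) auto
  also have "n * (2 * \<epsilon>\<^sup>2 / (1 - \<phi>\<^sup>2)) = 2 * n * \<epsilon>\<^sup>2 + n * (2 * \<epsilon>\<^sup>2 * \<phi>\<^sup>2 / (1 - \<phi>\<^sup>2))"
    using p1 by (simp add: field_simps)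
  also have "n * (2 * \<epsilon>\<^sup>2 * \<phi>\<^sup>2 / (1 - \<phi>\<^sup>2)) \<ge> m * (2 * \<epsilon>\<^sup>2 * \<phi>\<^sup>2 / (1 - \<phi>\<^sup>2))"
    using nm p1 by (intro mult_right_mono) auto
  moreover have "m * (2 * \<epsilon>\<^sup>2 * \<phi>\<^sup>2 / (1 - \<phi>\<^sup>2)) = ln 2"
    using mdef p1 by (simp add: field_simps)
  ultimately have "n * K \<ge> 2 * n * \<epsilon>\<^sup>2 + ln 2" by linarith
  hence "exp (- n * K) \<le> exp (- 2 * n * \<epsilon>\<^sup>2 - ln 2)" by simp
  also have "\<dots> = exp (- 2 * n * \<epsilon>\<^sup>2) / 2" by (simp add: exp_diff)
  finally show ?thesis .
qed



lemma upper_tail: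
  fixes p \<epsilon> \<phi> m C :: real and n :: nat
  assumes BE: "berry_esseen_const C" and p: "0 < p" "p < 1" and eps: "0 < \<epsilon>" "\<epsilon> < 3/4"
    and phi: "0 \<le> \<phi>" and th: "4 * \<epsilon> / 3 + \<phi> < 1"
    and m: "0 < m" "m < real n"
    and mdef: "2 * \<epsilon>\<^sup>2 * m * \<phi>\<^sup>2 = ln 2 * (1 - \<phi>\<^sup>2)"
  shows "measure_pmf.prob (binomial_pmf n p) {k. real k \<ge> real n * (p + \<epsilon>)}
     \<le> exp (- 2 * real n * \<epsilon>\<^sup>2) * (1 + 4 * C / sqrt ((1 - (4 * \<epsilon> / 3 + \<phi>)\<^sup>2) * m)) / 2"
    (is "?U \<le> ?a * (1 + ?\<zeta>) / 2")
proof -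
  define \<theta> where "\<theta> = 4 * \<epsilon> / 3 + \<phi>"
  define r where "r = p + \<epsilon>"
  have C: "C \<ge> 0" by (rule BE_nonneg[OF BE])
  have th1: "0 < 1 - \<theta>\<^sup>2" using th eps phi unfolding \<theta>_def by (simp add: abs_square_less_1)
  have zeta: "?\<zeta> \<ge> 0" using C th1 m unfolding \<theta>_def by (intro divide_nonneg_nonneg) auto
  have phi1: "\<phi>\<^sup>2 < 1" using phi th eps by (simp add: abs_square_less_1)
  have n0: "n > 0" using m by simp
  have a0: "?a > 0" by simp
  have half: "?a / 2 \<le> ?a * (1 + ?\<zeta>) / 2" using zeta a0 by simp
  consider "r > 1" | "r = 1" | "r < 1" "\<bar>2 * r - 1\<bar> > \<theta>" | "r < 1" "\<bar>2 * r - 1\<bar> \<le> \<theta>" by linarith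
  then show ?thesis
  proof cases
    case 1
    have "{k. real k \<ge> real n * (p + \<epsilon>)} \<inter> {..n} = {}"
    proof -
      have "real k < real n * (p + \<epsilon>)" if "k \<le> n" for k
      proof -
        have "real k \<le> real n" using that by simp
        also have "\<dots> < real n * r" using 1 n0 by simp
        finally show ?thesis unfolding r_def .
      qed
      thus ?thesis by force
    qed
    hence "?U = 0" using p by (simp add: prob_binom_sum)
    thus ?thesis using zeta a0 by simp
  next
    case 2
    have set: "{k. real k \<ge> real n * (p + \<epsilon>)} \<inter> {..n} = {n}"
      using 2 unfolding r_def by auto
    have pe: "p = 1 - \<epsilon>" using 2 unfolding r_def by simp
    have "?U = p ^ n" using p by (simp add: prob_binom_sum set)
    also have "\<dots> = exp (- real n * (- ln (1 - \<epsilon>)))"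
      using p pe by (simp add: exp_of_nat_mult)
    also have "\<dots> \<le> ?a / 2"
    proof (rule extreme_bound[of "1 - 4 * \<epsilon> / 3" \<phi>])
      show "0 < 1 - (1 - 4 * \<epsilon> / 3)\<^sup>2" using eps by (simp add: abs_square_less_1)
      show "\<phi>\<^sup>2 \<le> (1 - 4 * \<epsilon> / 3)\<^sup>2" using phi th by (intro power_mono) auto
      show "- ln (1 - \<epsilon>) \<ge> 2 * \<epsilon>\<^sup>2 / (1 - (1 - 4 * \<epsilon> / 3)\<^sup>2)" using r1_bound[OF eps] by simp
    qed (use phi1 m mdef in auto)
    also have "\<dots> \<le> ?a * (1 + ?\<zeta>) / 2" by (rule half)
    finally show ?thesis .
  next
    case 3
    have pr: "p < r" "0 < r" using eps p unfolding r_def by auto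
    have "?U = measure_pmf.prob (binomial_pmf n p) {k. real k \<ge> real n * r}" unfolding r_def ..
    also have "\<dots> \<le> exp (- real n * KL r p) * measure_pmf.prob (binomial_pmf n r) {k. real k \<ge> real n * r}"
      by (rule tilt) (use p pr 3 in auto)
    also have "\<dots> \<le> exp (- real n * KL r p) * 1"
      by (intro mult_left_mono) auto
    also have "\<dots> \<le> ?a / 2"
    proof -
      define y0 where "y0 = 2 * r - 1 - 4 * \<epsilon> / 3"
      have pe: "r - \<epsilon> = p" unfolding r_def by simp
      note KLb = KL_lower[of \<epsilon> r, unfolded pe, folded y0_def]
      have e_r: "\<epsilon> < r" using p unfolding r_def by simp
      have y01: "0 < 1 - y0\<^sup>2" using KLb(1,2)[OF eps(1) e_r 3(1)] by (simp add: abs_square_less_1)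
      have "\<phi>\<^sup>2 \<le> y0\<^sup>2"
      proof (cases "2 * r - 1 > \<theta>")
        case True
        hence "\<phi> \<le> y0" unfolding y0_def \<theta>_def by simp
        thus ?thesis using phi by (intro power_mono) auto
      next
        case False
        hence "2 * r - 1 < - \<theta>" using 3 by linarith
        hence "\<phi> \<le> - y0" unfolding y0_def \<theta>_def using eps by simp
        hence "\<phi>\<^sup>2 \<le> (- y0)\<^sup>2" using phi by (intro power_mono) auto
        thus ?thesis by simp
      qed
      thus ?thesis unfolding mult_1_right
        by (intro extreme_bound[where w=y0 and \<phi>=\<phi> and m=m]) (use y01 phi1 KLb(3)[OF eps(1) e_r 3(1)] m mdef in auto)
    qed
    also have "\<dots> \<le> ?a * (1 + ?\<zeta>) / 2" by (rule half)
    finally show ?thesis .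
  next
    case 4
    have pr: "p < r" "0 < r" using eps p unfolding r_def by auto
    have e_r: "\<epsilon> < r" using p unfolding r_def by simp
    have pe: "r - \<epsilon> = p" unfolding r_def by simp
    define y0 where "y0 = 2 * r - 1 - 4 * \<epsilon> / 3"
    note KLb = KL_lower[of \<epsilon> r, unfolded pe, folded y0_def]
    have y01: "0 < 1 - y0\<^sup>2" "1 - y0\<^sup>2 \<le> 1" using KLb(1,2)[OF eps(1) e_r 4(1)] by (auto simp: abs_square_less_1)
    have "2 * \<epsilon>\<^sup>2 \<le> 2 * \<epsilon>\<^sup>2 / (1 - y0\<^sup>2)"
      using y01 by (simp add: le_divide_eq mult_left_le)
    hence K: "KL r p \<ge> 2 * \<epsilon>\<^sup>2" using KLb(3)[OF eps(1) e_r 4(1)] by linarith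
    have eK: "exp (- real n * KL r p) \<le> ?a"
      using K n0 by (simp add: mult_left_mono)
    have rr: "r * (1 - r) \<ge> (1 - \<theta>\<^sup>2) / 4"
    proof -
      have "(2 * r - 1)\<^sup>2 \<le> \<theta>\<^sup>2" using 4 by (metis abs_le_square_iff abs_of_nonneg abs_ge_zero order_trans)
      thus ?thesis by (simp add: power2_eq_square algebra_simps field_simps)
    qed
    have BEr: "measure_pmf.prob (binomial_pmf n r) {k. real k \<ge> real n * r} \<le> 1/2 + C / sqrt (real n * (r * (1 - r)))"
      by (rule BE_bern_upper[OF BE pr(2) 4(1) n0])
    have cz: "C / sqrt (real n * (r * (1 - r))) \<le> ?\<zeta> / 2"
    proof -
      have "m * ((1 - \<theta>\<^sup>2) / 4) \<le> real n * (r * (1 - r))"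
        using m rr th1 by (intro mult_mono) auto
      hence "m * (1 - \<theta>\<^sup>2) / 4 \<le> real n * (r * (1 - r))" by simp
      hence "sqrt (m * (1 - \<theta>\<^sup>2) / 4) \<le> sqrt (real n * (r * (1 - r)))" by simp
      moreover have "sqrt (m * (1 - \<theta>\<^sup>2) / 4) = sqrt ((1 - \<theta>\<^sup>2) * m) / 2"
        by (simp add: real_sqrt_divide mult.commute)
      moreover have "sqrt ((1 - \<theta>\<^sup>2) * m) > 0" using th1 m by simp
      ultimately have "C / sqrt (real n * (r * (1 - r))) \<le> C / (sqrt ((1 - \<theta>\<^sup>2) * m) / 2)"
        using C n0 pr 4(1) by (intro divide_left_mono) auto
      thus ?thesis unfolding \<theta>_def by (simp add: mult.commute)
    qed
    have "?U = measure_pmf.prob (binomial_pmf n p) {k. real k \<ge> real n * r}" unfolding r_def ..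
    also have "\<dots> \<le> exp (- real n * KL r p) * measure_pmf.prob (binomial_pmf n r) {k. real k \<ge> real n * r}"
      by (rule tilt) (use p pr 4 in auto)
    also have "\<dots> \<le> ?a * (1/2 + ?\<zeta> / 2)"
      using BEr cz eK by (intro mult_mono) auto
    also have "\<dots> = ?a * (1 + ?\<zeta>) / 2" by (simp add: field_simps)
    finally show ?thesis .
  qed
qed



lemma binom_sym:
  fixes p t :: real
  assumes p: "0 < p" "p < 1"
  shows "measure_pmf.prob (binomial_pmf n p) {k. real k \<le> t}
       = measure_pmf.prob (binomial_pmf n (1 - p)) {k. real k \<ge> real n - t}"
proof -
  have "measure_pmf.prob (binomial_pmf n p) {k. real k \<le> t}
      = (\<Sum>k\<in>{k. real k \<le> t} \<inter> {..n}. real (n choose k) * p ^ k * (1 - p) ^ (n - k))"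
    using p by (rule prob_binom_sum)
  also have "\<dots> = (\<Sum>k\<in>{k. real k \<ge> real n - t} \<inter> {..n}. real (n choose k) * (1 - p) ^ k * (1 - (1 - p)) ^ (n - k))"
    apply (rule sum.reindex_bij_witness[where i="\<lambda>k. n - k" and j="\<lambda>k. n - k"])
    apply (auto simp: of_nat_diff)[4]
    apply (auto simp: binomial_symmetric[symmetric] algebra_simps)
    done
  also have "\<dots> = measure_pmf.prob (binomial_pmf n (1 - p)) {k. real k \<ge> real n - t}"
    using p by (intro prob_binom_sum[symmetric]) auto
  finally show ?thesis .
qed



theorem theorem4:
  fixes C\<^sub>B\<^sub>E \<epsilon> \<delta> p :: real and n :: nat
  assumes BE: "berry_esseen_const C\<^sub>B\<^sub>E"
    and eps: "0 < \<epsilon>" "\<epsilon> < 3/4"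
    and delta: "0 < \<delta>" "\<delta> < 2 * exp (- (9 * ln 2) / (3 - 4 * \<epsilon>)\<^sup>2)"
    and p: "0 < p" "p < 1"
    and n: "real n > 1 / (2 * \<epsilon>\<^sup>2) *
              ln ((1 + 4 * C\<^sub>B\<^sub>E / sqrt ((1 - (4 * \<epsilon> / 3 + sqrt (ln 2 / ln (2 / \<delta>)))\<^sup>2)
                                       * (ln (1 / \<delta>) / (2 * \<epsilon>\<^sup>2)))) / \<delta>)"
  shows "measure_pmf.prob (binomial_pmf n p) {k. \<bar>real k / real n - p\<bar> < \<epsilon>} > 1 - \<delta>"
proof -
  define \<phi> where "\<phi> = sqrt (ln 2 / ln (2 / \<delta>))"
  define m where "m = ln (1 / \<delta>) / (2 * \<epsilon>\<^sup>2)"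
  define \<zeta> where "\<zeta> = 4 * C\<^sub>B\<^sub>E / sqrt ((1 - (4 * \<epsilon> / 3 + \<phi>)\<^sup>2) * m)"
  define a where "a = exp (- 2 * real n * \<epsilon>\<^sup>2)"
  have C: "C\<^sub>B\<^sub>E \<ge> 0" by (rule BE_nonneg[OF BE])
  have e34: "0 < 3 - 4 * \<epsilon>" "3 - 4 * \<epsilon> < 3" using eps by auto
  have sq9: "(3 - 4 * \<epsilon>)\<^sup>2 < 9"
  proof -
    have "(3 - 4 * \<epsilon>)\<^sup>2 < 3\<^sup>2" using e34 by (intro power_strict_mono) auto
    thus ?thesis by simp
  qed
  have ln2: "ln 2 > (0::real)" by simp
  have d1: "\<delta> < 1"
  proof -
    have "9 * ln 2 / (3 - 4 * \<epsilon>)\<^sup>2 > ln 2"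
      using sq9 e34 ln2 by (simp add: less_divide_eq)
    hence "exp (- (9 * ln 2) / (3 - 4 * \<epsilon>)\<^sup>2) < exp (- ln 2)" by simp
    hence "2 * exp (- (9 * ln 2) / (3 - 4 * \<epsilon>)\<^sup>2) < 1" by (simp add: exp_minus)
    thus ?thesis using delta by linarith
  qed
  define L where "L = ln (1 / \<delta>)"
  have L: "L > 0" unfolding L_def using delta d1 by simp
  have l2d: "ln (2 / \<delta>) = ln 2 + L" unfolding L_def using delta by (simp add: ln_div)
  have big: "ln (2 / \<delta>) > 9 * ln 2 / (3 - 4 * \<epsilon>)\<^sup>2"
  proof -
    have "ln \<delta> < ln (2 * exp (- (9 * ln 2) / (3 - 4 * \<epsilon>)\<^sup>2))" using delta by simp
    also have "\<dots> = ln 2 - 9 * ln 2 / (3 - 4 * \<epsilon>)\<^sup>2" by (simp add: ln_mult)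
    finally show ?thesis using delta by (simp add: ln_div)
  qed
  have phi0: "0 \<le> \<phi>" unfolding \<phi>_def using L l2d ln2 by simp
  have phisq: "\<phi>\<^sup>2 = ln 2 / (ln 2 + L)" unfolding \<phi>_def using L ln2 l2d by simp
  have th: "4 * \<epsilon> / 3 + \<phi> < 1"
  proof -
    have "ln 2 / ln (2 / \<delta>) < (3 - 4 * \<epsilon>)\<^sup>2 / 9"
    proof -
      have pos: "ln (2 / \<delta>) > 0" using l2d L ln2 by linarith
      have "ln 2 * 9 < ln (2 / \<delta>) * (3 - 4 * \<epsilon>)\<^sup>2"
        using big e34 by (simp add: divide_less_eq mult.commute)
      thus ?thesis using pos by (simp add: divide_less_eq less_divide_eq mult.commute)
    qed
    hence "\<phi> < sqrt ((3 - 4 * \<epsilon>)\<^sup>2 / 9)" unfolding \<phi>_def by simp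
    also have "\<dots> = (3 - 4 * \<epsilon>) / 3" using e34 by (simp add: real_sqrt_divide)
    finally show ?thesis by simp
  qed
  have m0: "m > 0" unfolding m_def L_def[symmetric] using L eps by simp
  have mdef: "2 * \<epsilon>\<^sup>2 * m * \<phi>\<^sup>2 = ln 2 * (1 - \<phi>\<^sup>2)"
  proof -
    have Lp: "ln 2 + L \<noteq> 0" "L + ln 2 \<noteq> 0" using L ln2 by linarith+
    show ?thesis unfolding m_def L_def[symmetric] phisq using eps Lp by (simp add: field_simps)
  qed
  have zeta: "\<zeta> \<ge> 0" unfolding \<zeta>_def
  proof (intro divide_nonneg_nonneg)
    have "(4 * \<epsilon> / 3 + \<phi>)\<^sup>2 < 1" using th eps phi0 by (simp add: abs_square_less_1)
    thus "0 \<le> sqrt ((1 - (4 * \<epsilon> / 3 + \<phi>)\<^sup>2) * m)" using m0 by simp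
  qed (use C in auto)
  have n': "real n > ln ((1 + \<zeta>) / \<delta>) / (2 * \<epsilon>\<^sup>2)"
    using n unfolding \<zeta>_def \<phi>_def m_def by simp
  have nm: "m < real n"
  proof -
    have "ln (1 / \<delta>) \<le> ln ((1 + \<zeta>) / \<delta>)" using zeta delta by (simp add: divide_right_mono)
    hence "m \<le> ln ((1 + \<zeta>) / \<delta>) / (2 * \<epsilon>\<^sup>2)" unfolding m_def using eps by (simp add: divide_right_mono)
    thus ?thesis using n' by linarith
  qed
  have n0: "n > 0" using nm m0 by simp
  have az: "a * (1 + \<zeta>) < \<delta>"
  proof -
    have "ln ((1 + \<zeta>) / \<delta>) < 2 * \<epsilon>\<^sup>2 * real n" using n' eps by (simp add: divide_less_eq mult.commute)
    hence "ln (1 + \<zeta>) - ln \<delta> < 2 * \<epsilon>\<^sup>2 * real n" using zeta delta by (simp add: ln_div)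
    hence "exp (ln (1 + \<zeta>) + (- 2 * real n * \<epsilon>\<^sup>2)) < exp (ln \<delta>)" by (simp add: algebra_simps)
    thus ?thesis unfolding a_def exp_add using zeta delta by (simp add: mult.commute)
  qed
  have U: "measure_pmf.prob (binomial_pmf n p) {k. real k \<ge> real n * (p + \<epsilon>)} \<le> a * (1 + \<zeta>) / 2"
    unfolding a_def \<zeta>_def by (rule upper_tail[OF BE p eps phi0 th m0 nm mdef])
  have Lo: "measure_pmf.prob (binomial_pmf n p) {k. real k \<le> real n * (p - \<epsilon>)} \<le> a * (1 + \<zeta>) / 2"
  proof -
    have "measure_pmf.prob (binomial_pmf n p) {k. real k \<le> real n * (p - \<epsilon>)}
        = measure_pmf.prob (binomial_pmf n (1 - p)) {k. real k \<ge> real n - real n * (p - \<epsilon>)}"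
      by (rule binom_sym[OF p])
    also have "{k. real k \<ge> real n - real n * (p - \<epsilon>)} = {k. real k \<ge> real n * ((1 - p) + \<epsilon>)}"
      by (simp add: algebra_simps)
    also have "measure_pmf.prob (binomial_pmf n (1 - p)) \<dots> \<le> a * (1 + \<zeta>) / 2"
      unfolding a_def \<zeta>_def by (rule upper_tail[OF BE _ _ eps phi0 th m0 nm mdef]) (use p in auto)
    finally show ?thesis .
  qed
  let ?A = "{k. \<bar>real k / real n - p\<bar> < \<epsilon>}"
  have sub: "UNIV - ?A \<subseteq> {k. real k \<ge> real n * (p + \<epsilon>)} \<union> {k. real k \<le> real n * (p - \<epsilon>)}"
  proof
    fix k assume "k \<in> UNIV - ?A"
    hence "real k / real n \<ge> p + \<epsilon> \<or> real k / real n \<le> p - \<epsilon>" by auto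
    thus "k \<in> {k. real k \<ge> real n * (p + \<epsilon>)} \<union> {k. real k \<le> real n * (p - \<epsilon>)}"
      using n0 by (auto simp: le_divide_eq divide_le_eq mult.commute)
  qed
  have "measure_pmf.prob (binomial_pmf n p) (UNIV - ?A)
      \<le> measure_pmf.prob (binomial_pmf n p) ({k. real k \<ge> real n * (p + \<epsilon>)} \<union> {k. real k \<le> real n * (p - \<epsilon>)})"
    using sub by (intro measure_pmf.finite_measure_mono) auto
  also have "\<dots> \<le> measure_pmf.prob (binomial_pmf n p) {k. real k \<ge> real n * (p + \<epsilon>)}
      + measure_pmf.prob (binomial_pmf n p) {k. real k \<le> real n * (p - \<epsilon>)}"
    by (rule measure_Un_le) auto
  also have "\<dots> \<le> a * (1 + \<zeta>)" using U Lo by simp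
  finally have "measure_pmf.prob (binomial_pmf n p) (UNIV - ?A) < \<delta>" using az by simp
  moreover have "measure_pmf.prob (binomial_pmf n p) (UNIV - ?A) = 1 - measure_pmf.prob (binomial_pmf n p) ?A"
    using measure_pmf.prob_compl[of ?A "binomial_pmf n p"] by simp
  ultimately show ?thesis by simp
qed

end
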